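(* Let $\psi_S$ be the Shannon wavelet, i.e. $|\hat\psi_S(\xi)|^2=1$ if $|\xi|\in[\pi,2\pi]$ and $0$ otherwise, and take $\psi=\psi_S$ in the definitions of the context. Then for every $d\in\mathbb{R}$ and $\ell\ge1$, $$\sum_{i,j=0}^\ell w^{AV}_iV_d(i,j)w^{AV}_j=\frac{\pi\,g(-4d)}{2(2-2^{-\ell})\kappa_\ell\log^2(2)\,g^2(-2d)},\qquad g(x)=\int_\pi^{2\pi}\lambda^x\,d\lambda.$$
   Context: For a wavelet $\psi$ with Fourier transform $\hat\psi(\xi)=\int\psi(t)e^{-i\xi t}dt$: for $u\ge0$, $\mathbf e_u(\xi)=2^{-u/2}[1,e^{-i2^{-u}\xi},\dots,e^{-i(2^u-1)2^{-u}\xi}]^T$, $\mathbf D_u(\lambda;d)=\sum_{l\in\mathbb{Z}}|\lambda+2l\pi|^{-2d}\mathbf e_u(\lambda+2l\pi)\overline{\hat\psi(\lambda+2l\pi)}\hat\psi(2^{-u}(\lambda+2l\pi))$, $I_u(d)=\int_{-\pi}^{\pi}|\mathbf D_u(\lambda;d)|^2d\lambda$, $K(d)=\int_{\mathbb{R}}|\xi|^{-2d}|\hat\psi(\xi)|^2d\xi$, $V_d(i,j)=\frac{4\pi\,2^{2d|i-j|}2^{i\wedge j}}{K(d)^2}I_{|i-j|}(d)$. For $\ell\ge1$: $\eta_\ell=\sum_{j=0}^\ell j\frac{2^{-j}}{2-2^{-\ell}}$, $\kappa_\ell=\sum_{j=0}^\ell(j-\eta_\ell)^2\frac{2^{-j}}{2-2^{-\ell}}$,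 $w^{AV}_i=\frac{(i-\eta_\ell)2^{-i}}{2\log(2)\kappa_\ell(2-2^{-\ell})}$, $i=0,\dots,\ell$. *)

theory Defs
  imports "HOL-Analysis.Analysis"
begin

text \<open>The wavelet is represented through its Fourier transform psi_hat :: real => complex.
  Vectors in C^(2^u) are represented as functions nat => complex on indices k < 2^u.\<close>

definition e_vec :: "nat \<Rightarrow> real \<Rightarrow> nat \<Rightarrow> complex" where
  "e_vec u \<xi> k = complex_of_real (2 powr (- real u / 2)) *
     exp (- \<i> * complex_of_real (real k * 2 powr (- real u) * \<xi>))"

definition D_vec :: "(real \<Rightarrow> complex) \<Rightarrow> nat \<Rightarrow> real \<Rightarrow> real \<Rightarrow> nat \<Rightarrow> complex" where
  "D_vec psi_hat u lam d k = infsum (\<lambda>l::int.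
      complex_of_real (\<bar>lam + 2 * of_int l * pi\<bar> powr (- 2 * d))
      * e_vec u (lam + 2 * of_int l * pi) k
      * cnj (psi_hat (lam + 2 * of_int l * pi))
      * psi_hat (2 powr (- real u) * (lam + 2 * of_int l * pi))) UNIV"

definition I_fun :: "(real \<Rightarrow> complex) \<Rightarrow> nat \<Rightarrow> real \<Rightarrow> real" where
  "I_fun psi_hat u d = (LBINT lam=-pi..pi. (\<Sum>k<2^u. (cmod (D_vec psi_hat u lam d k))^2))"

definition K_fun :: "(real \<Rightarrow> complex) \<Rightarrow> real \<Rightarrow> real" where
  "K_fun psi_hat d = (LINT \<xi>|lborel. \<bar>\<xi>\<bar> powr (- 2 * d) * (cmod (psi_hat \<xi>))^2)"

definition V_fun :: "(real \<Rightarrow> complex) \<Rightarrow> real \<Rightarrow> nat \<Rightarrow> nat \<Rightarrow> real" where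
  "V_fun psi_hat d i j =
     4 * pi * 2 powr (2 * d * real (max i j - min i j)) * 2 ^ (min i j)
       / (K_fun psi_hat d)^2 * I_fun psi_hat (max i j - min i j) d"

definition eta :: "nat \<Rightarrow> real" where
  "eta L = (\<Sum>j=0..L. real j * (2 powr (- real j) / (2 - 2 powr (- real L))))"

definition kappa :: "nat \<Rightarrow> real" where
  "kappa L = (\<Sum>j=0..L. (real j - eta L)^2 * (2 powr (- real j) / (2 - 2 powr (- real L))))"

definition w_AV :: "nat \<Rightarrow> nat \<Rightarrow> real" where
  "w_AV L i = (real i - eta L) * 2 powr (- real i)
      / (2 * ln 2 * kappa L * (2 - 2 powr (- real L)))"

definition g_fun :: "real \<Rightarrow> real" where
  "g_fun x = (LBINT lam=pi..2*pi. lam powr x)"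

end

theory Submission imports Defs begin

lemma cont_powr: "continuous_on {a..b} (\<lambda>x::real. x powr c)" if "0 < a" for a b c
  using that by (intro continuous_intros) auto

lemma g_eq: "g_fun c = integral {pi..2*pi} (\<lambda>x. x powr c)"
proof -
  have "set_integrable lborel {pi..2*pi} (\<lambda>x. x powr c)"
    unfolding set_integrable_def
    by (rule borel_integrable_compact) (auto intro: cont_powr)
  then show ?thesis unfolding g_fun_def
    by (intro interval_integral_eq_integral) auto
qed

lemma int_sym: "integral {-pi..pi} (\<lambda>x. (2*pi - \<bar>x\<bar>) powr c) = 2 * integral {pi..2*pi} (\<lambda>x. x powr c)"
proof -
  let ?h = "\<lambda>x::real. (2*pi - \<bar>x\<bar>) powr c"
  have ch: "continuous_on {-pi..pi} ?h"
    by (intro continuous_intros) (auto simp: abs_if)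
  have ih: "?h integrable_on {-pi..pi}"
    using ch integrable_continuous_real by blast
  have sh: "integral {-pi..0} (\<lambda>x. (x + 2*pi) powr c) = integral {pi..2*pi} (\<lambda>x. x powr c)"
    using integral_shift_real_ivl[of "pi" "2*pi" "2*pi" "\<lambda>x. x powr c"] by simp
  have 1: "integral {-pi..0} ?h = integral {pi..2*pi} (\<lambda>x. x powr c)"
    by (subst sh[symmetric], rule integral_cong) (auto simp: algebra_simps)
  have "integral {0..pi} ?h = integral {-pi..0} ?h"
    using Henstock_Kurzweil_Integration.integral_reflect_real[where f="?h" and a="-pi" and b=0] by simp
  then have 2: "integral {0..pi} ?h = integral {pi..2*pi} (\<lambda>x. x powr c)" using 1 by simp
  show ?thesis
    using Henstock_Kurzweil_Integration.integral_combine[of "-pi" 0 pi ?h] ih 1 2 by simp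
qed

lemma K_eq:
  fixes psi_hat :: "real \<Rightarrow> complex"
  assumes shannon: "\<And>\<xi>. (cmod (psi_hat \<xi>))^2 = (if \<bar>\<xi>\<bar> \<in> {pi..2*pi} then 1 else 0)"
  shows "K_fun psi_hat d = 2 * g_fun (-2*d)"
proof -
  let ?f = "\<lambda>x::real. \<bar>x\<bar> powr (-2*d)"
  let ?A = "{-2*pi..-pi}" and ?B = "{pi..2*pi}"
  have pt: "\<bar>x\<bar> powr (- 2 * d) * (cmod (psi_hat x))\<^sup>2
      = indicator ?A x *\<^sub>R ?f x + indicator ?B x *\<^sub>R ?f x" for x
    by (auto simp: shannon indicator_def)
  have cA: "continuous_on ?A ?f"
    apply (intro continuous_intros) apply auto using pi_gt_zero by linarith+
  have cB: "continuous_on ?B ?f"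
    apply (intro continuous_intros) apply auto using pi_gt_zero by linarith+
  have iA: "set_integrable lborel ?A ?f" unfolding set_integrable_def
    by (rule borel_integrable_compact[OF _ cA]) auto
  have iB: "set_integrable lborel ?B ?f" unfolding set_integrable_def
    by (rule borel_integrable_compact[OF _ cB]) auto
  have "K_fun psi_hat d = (LINT x|lborel. indicator ?A x *\<^sub>R ?f x + indicator ?B x *\<^sub>R ?f x)"
    unfolding K_fun_def by (simp only: pt)
  also have "\<dots> = (LINT x:?A|lborel. ?f x) + (LINT x:?B|lborel. ?f x)"
    using iA iB unfolding set_integrable_def set_lebesgue_integral_def
    by (rule Bochner_Integration.integral_add)
  also have "\<dots> = integral ?A ?f + integral ?B ?f"
    using set_borel_integral_eq_integral(2)[OF iA] set_borel_integral_eq_integral(2)[OF iB] by simp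
  also have "integral ?A ?f = integral ?B ?f"
    using Henstock_Kurzweil_Integration.integral_reflect_real[where f="?f" and a="pi" and b="2*pi"] by simp
  also have "integral ?B ?f = integral ?B (\<lambda>x. x powr (-2*d))"
    by (rule integral_cong) auto
  finally show ?thesis by (simp add: g_eq)
qed

lemma key:
  fixes lam :: real and l :: int
  assumes "\<bar>lam\<bar> < pi" "lam \<noteq> 0" "\<bar>lam + 2 * of_int l * pi\<bar> \<in> {pi..2*pi}"
  shows "l = (if lam > 0 then -1 else 1) \<and> \<bar>lam + 2 * of_int l * pi\<bar> = 2*pi - \<bar>lam\<bar>"
proof -
  have "l \<le> -2 \<or> l = -1 \<or> l = 0 \<or> l = 1 \<or> l \<ge> 2" by linarith
  moreover have False if "l \<le> -2"
  proof -
    have "of_int l * pi \<le> -2 * pi" using that pi_gt_zero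
      by (metis mult_right_mono of_int_le_iff of_int_minus of_int_numeral less_imp_le)
    moreover have "\<bar>lam\<bar> < pi" using assms by simp
    ultimately have "lam + 2 * of_int l * pi < -2*pi" by linarith
    then show False using assms(3) by auto
  qed
  moreover have False if "l \<ge> 2"
  proof -
    have "2 * pi \<le> of_int l * pi" using that pi_gt_zero
      by (metis mult_right_mono of_int_le_iff of_int_numeral less_imp_le)
    moreover have "\<bar>lam\<bar> < pi" using assms by simp
    ultimately have "lam + 2 * of_int l * pi > 2*pi" by linarith
    then show False using assms(3) by auto
  qed
  ultimately show ?thesis using assms pi_gt_zero by (auto split: if_splits simp: abs_if)
qed

lemma psi0:
  assumes shannon: "\<And>\<xi>. (cmod (psi_hat \<xi>))^2 = (if \<bar>\<xi>\<bar> \<in> {pi..2*pi} then 1 else 0)"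
    and "\<bar>x\<bar> \<notin> {pi..2*pi}"
  shows "psi_hat x = 0"
proof -
  have "(cmod (psi_hat x))^2 = 0" using shannon[of x] assms(2) by simp
  then show ?thesis by simp
qed

lemma psi1:
  assumes shannon: "\<And>\<xi>. (cmod (psi_hat \<xi>))^2 = (if \<bar>\<xi>\<bar> \<in> {pi..2*pi} then 1 else 0)"
    and "\<bar>x\<bar> \<in> {pi..2*pi}"
  shows "cnj (psi_hat x) * psi_hat x = 1"
proof -
  have "psi_hat x * cnj (psi_hat x) = of_real ((cmod (psi_hat x))^2)"
    by (rule complex_norm_square[symmetric])
  also have "\<dots> = 1" using shannon[of x] assms(2) by simp
  finally show ?thesis by (simp add: mult.commute)
qed

lemma D_zero:
  fixes psi_hat :: "real \<Rightarrow> complex"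
  assumes shannon: "\<And>\<xi>. (cmod (psi_hat \<xi>))^2 = (if \<bar>\<xi>\<bar> \<in> {pi..2*pi} then 1 else 0)"
    and u: "u \<ge> 1" and lam: "\<bar>lam\<bar> < pi" "lam \<noteq> 0"
  shows "D_vec psi_hat u lam d k = 0"
  unfolding D_vec_def
proof (rule infsum_0)
  fix l :: int
  assume "l \<in> UNIV"
  let ?x = "lam + 2 * of_int l * pi"
  have "cnj (psi_hat ?x) * psi_hat (2 powr (- real u) * ?x) = 0"
  proof (cases "\<bar>?x\<bar> \<in> {pi..2*pi}")
    case False
    then show ?thesis using psi0[OF shannon] by simp
  next
    case True
    from key[OF lam True] have ax: "\<bar>?x\<bar> = 2*pi - \<bar>lam\<bar>" by blast
    have "2 powr (- real u) \<le> 2 powr (-1)" using u by (intro powr_mono) auto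
    then have p: "2 powr (- real u) \<le> 1/2" by (simp add: powr_minus)
    have "\<bar>2 powr (- real u) * ?x\<bar> = 2 powr (- real u) * \<bar>?x\<bar>" by (simp add: abs_mult)
    also have "\<dots> \<le> 1/2 * \<bar>?x\<bar>" using p by (intro mult_right_mono) auto
    also have "\<dots> < pi" using ax lam by auto
    finally have "\<bar>2 powr (- real u) * ?x\<bar> \<notin> {pi..2*pi}" by auto
    then show ?thesis using psi0[OF shannon] by simp
  qed
  then show "complex_of_real (\<bar>?x\<bar> powr (- 2 * d)) * e_vec u ?x k * cnj (psi_hat ?x) *
         psi_hat (2 powr (- real u) * ?x) = 0"
    by (simp add: mult.assoc)
qed

lemma D_one:
  fixes psi_hat :: "real \<Rightarrow> complex"
  assumes shannon: "\<And>\<xi>. (cmod (psi_hat \<xi>))^2 = (if \<bar>\<xi>\<bar> \<in> {pi..2*pi} then 1 else 0)"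
    and lam: "\<bar>lam\<bar> < pi" "lam \<noteq> 0"
  shows "D_vec psi_hat 0 lam d 0 = of_real ((2*pi - \<bar>lam\<bar>) powr (-2*d))"
proof -
  define l0 :: int where "l0 = (if lam > 0 then -1 else 1)"
  let ?T = "\<lambda>l::int. complex_of_real (\<bar>lam + 2 * of_int l * pi\<bar> powr (- 2 * d))
      * e_vec 0 (lam + 2 * of_int l * pi) 0
      * cnj (psi_hat (lam + 2 * of_int l * pi))
      * psi_hat (2 powr (- real 0) * (lam + 2 * of_int l * pi))"
  have x0: "\<bar>lam + 2 * of_int l0 * pi\<bar> = 2*pi - \<bar>lam\<bar>"
    using lam by (auto simp: l0_def abs_if)
  have x0in: "\<bar>lam + 2 * of_int l0 * pi\<bar> \<in> {pi..2*pi}" using x0 lam by auto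
  have z: "?T l = 0" if "l \<noteq> l0" for l
  proof -
    have "\<bar>lam + 2 * of_int l * pi\<bar> \<notin> {pi..2*pi}"
      using key[OF lam, of l] that l0_def by blast
    then show ?thesis using psi0[OF shannon] by simp
  qed
  have "D_vec psi_hat 0 lam d 0 = infsum ?T UNIV" unfolding D_vec_def by simp
  also have "\<dots> = infsum ?T {l0}"
    apply (rule infsum_cong_neutral)
      apply simp
     apply (rule z, simp)
    apply simp
    done
  also have "\<dots> = ?T l0" by simp
  also have "\<dots> = of_real ((2*pi - \<bar>lam\<bar>) powr (-2*d))"
    using psi1[OF shannon x0in] x0 by (simp add: e_vec_def mult.assoc)
  finally show ?thesis .
qed

lemma I_zero:
  fixes psi_hat :: "real \<Rightarrow> complex"
  assumes shannon: "\<And>\<xi>. (cmod (psi_hat \<xi>))^2 = (if \<bar>\<xi>\<bar> \<in> {pi..2*pi} then 1 else 0)"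
    and u: "u \<ge> 1"
  shows "I_fun psi_hat u d = 0"
proof -
  have "I_fun psi_hat u d = (LBINT lam=-pi..pi. (0::real))"
    unfolding I_fun_def
    by (rule interval_integral_discrete_difference[where X="{0}"])
       (insert pi_ge_two, auto simp: D_zero[OF shannon u])
  then show ?thesis by simp
qed

lemma I_one:
  fixes psi_hat :: "real \<Rightarrow> complex"
  assumes shannon: "\<And>\<xi>. (cmod (psi_hat \<xi>))^2 = (if \<bar>\<xi>\<bar> \<in> {pi..2*pi} then 1 else 0)"
  shows "I_fun psi_hat 0 d = 2 * g_fun (-4*d)"
proof -
  let ?h = "\<lambda>x::real. (2*pi - \<bar>x\<bar>) powr (-4*d)"
  have pw: "((2*pi - \<bar>x\<bar>) powr (-2*d))^2 = ?h x" for x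
    by (simp add: power2_eq_square powr_add[symmetric])
  have pw': "((2*pi - \<bar>x\<bar>) powr (-(2*d)))^2 = (2*pi - \<bar>x\<bar>) powr (-(4*d))" for x
    by (simp add: power2_eq_square powr_add[symmetric])
  have "I_fun psi_hat 0 d = (LBINT lam=-pi..pi. ?h lam)"
    unfolding I_fun_def
    by (rule interval_integral_discrete_difference[where X="{0}"])
       (insert pi_ge_two, auto simp: D_one[OF shannon] pw pw')
  also have "\<dots> = integral {-pi..pi} ?h"
  proof (rule interval_integral_eq_integral)
    show "set_integrable lborel {- pi..pi} ?h" unfolding set_integrable_def
    proof (rule borel_integrable_compact)
      show "continuous_on {-pi..pi} ?h"
        by (intro continuous_intros) (auto simp: abs_if)
    qed simp
  qed simp
  also have "\<dots> = 2 * g_fun (-4*d)" by (simp add: int_sym g_eq)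
  finally show ?thesis .
qed

lemma V_off:
  fixes psi_hat :: "real \<Rightarrow> complex"
  assumes shannon: "\<And>\<xi>. (cmod (psi_hat \<xi>))^2 = (if \<bar>\<xi>\<bar> \<in> {pi..2*pi} then 1 else 0)"
    and "i \<noteq> j"
  shows "V_fun psi_hat d i j = 0"
proof -
  have "max i j - min i j \<ge> 1" using assms(2) by (cases "i \<le> j") (auto simp: max_def min_def)
  then show ?thesis unfolding V_fun_def by (simp add: I_zero[OF shannon])
qed

lemma V_diag:
  fixes psi_hat :: "real \<Rightarrow> complex"
  assumes shannon: "\<And>\<xi>. (cmod (psi_hat \<xi>))^2 = (if \<bar>\<xi>\<bar> \<in> {pi..2*pi} then 1 else 0)"
  shows "V_fun psi_hat d i i = 2 * pi * 2^i * g_fun (-4*d) / (g_fun (-2*d))^2"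
  unfolding V_fun_def by (simp add: I_one[OF shannon] K_eq[OF shannon] power_mult_distrib)

lemma alg: fixes a p B x y :: real assumes "p > 0"
  shows "(a*p/B) * (2*pi*(1/p)*x/y) * (a*p/B) = (a^2*p) * (2*pi*x/y)/B^2"
  using assms by (cases "B = 0"; cases "y = 0") (simp_all add: field_simps power2_eq_square)

theorem mainTheorem12:
  fixes psi_hat :: "real \<Rightarrow> complex" and d :: real and L :: nat
  assumes shannon: "\<And>\<xi>. (cmod (psi_hat \<xi>))^2 = (if \<bar>\<xi>\<bar> \<in> {pi..2*pi} then 1 else 0)"
    and l_ge: "L \<ge> 1"
  shows "(\<Sum>i=0..L. \<Sum>j=0..L. w_AV L i * V_fun psi_hat d i j * w_AV L j)
       = pi * g_fun (-4 * d)
         / (2 * (2 - 2 powr (- real L)) * kappa L * (ln 2)^2 * (g_fun (-2 * d))^2)"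
proof -
  define S where "S = 2 - 2 powr (- real L)"
  define C where "C = 2 * pi * g_fun (-4*d) / (g_fun (-2*d))^2"
  define A where "A = 2 * ln 2 * kappa L * S"
  have Spos: "S > 0"
  proof -
    have "2 powr (- real L) \<le> 2 powr 0" by (intro powr_mono) auto
    then show ?thesis by (simp add: S_def)
  qed
  have inner: "(\<Sum>j=0..L. w_AV L i * V_fun psi_hat d i j * w_AV L j) = w_AV L i * V_fun psi_hat d i i * w_AV L i"
    if "i \<in> {0..L}" for i
  proof -
    have "(\<Sum>j=0..L. w_AV L i * V_fun psi_hat d i j * w_AV L j)
        = (\<Sum>j=0..L. if i = j then w_AV L i * V_fun psi_hat d i i * w_AV L i else 0)"
      by (rule sum.cong) (auto simp: V_off[OF shannon])
    also have "\<dots> = w_AV L i * V_fun psi_hat d i i * w_AV L i" using that by simp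
    finally show ?thesis .
  qed
  have trm: "w_AV L i * V_fun psi_hat d i i * w_AV L i = ((real i - eta L)^2 * 2 powr (- real i)) * C / A^2" for i
  proof -
    have p: "(2::real) ^ i = 1 / 2 powr (- real i)"
      by (simp add: powr_minus powr_realpow divide_inverse)
    have "2 powr (- real i) > (0::real)" by simp
    then show ?thesis
      unfolding w_AV_def V_diag[OF shannon] C_def A_def S_def p
      by (rule alg)
  qed
  have ksum: "(\<Sum>i=0..L. (real i - eta L)^2 * 2 powr (- real i)) = kappa L * S"
  proof -
    have "kappa L = (\<Sum>i=0..L. (real i - eta L)^2 * 2 powr (- real i)) / S"
      unfolding kappa_def S_def by (simp add: sum_divide_distrib)
    then show ?thesis using Spos by simp
  qed
  have "(\<Sum>i=0..L. \<Sum>j=0..L. w_AV L i * V_fun psi_hat d i j * w_AV L j)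
      = (\<Sum>i=0..L. ((real i - eta L)^2 * 2 powr (- real i)) * C / A^2)"
    by (simp add: inner trm)
  also have "\<dots> = kappa L * S * C / A^2"
    by (simp add: sum_divide_distrib[symmetric] sum_distrib_right[symmetric] ksum)
  also have "\<dots> = pi * g_fun (-4 * d)
         / (2 * S * kappa L * (ln 2)^2 * (g_fun (-2 * d))^2)"
  proof (cases "kappa L = 0 \<or> g_fun (-2*d) = 0")
    case True
    then show ?thesis unfolding C_def A_def by auto
  next
    case False
    then show ?thesis unfolding C_def A_def using Spos
      by (simp add: field_simps power2_eq_square)
  qed
  finally show ?thesis by (simp add: S_def)
qed

end
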